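(* Assume (H1) and let $\alpha\in(0,2)$. There exists a constant $C_1>0$ such that for any $\theta>1/d$ there is a $[1,\infty]$-valued random variable $R_0$, finite $\mathbb P$-a.s., such that for $\mathbb P$-a.e. $\omega$, all $f:\mathbb Z^d\to\mathbb R$, all $R>R_0(\omega)$, all $y\in B_R$ and all $r\in[\log^\theta R,\,R]$, $$\frac{1}{\mu(B_r(y))}\sum_{x\in B_r(y)}f(x)^2-\Big(\frac{1}{\mu(B_r(y))}\sum_{x\in B_r(y)}f(x)\Big)^2\le C_1\,r^{\alpha-d}\,\mathscr E^\omega_{B_r(y)}(f,f).$$
   Context: Assumption (H1): on a probability space $(\Omega,\mathcal F,\mathbb P)$, $\{w_{x,y}\}$, indexed by unordered pairs of distinct points of $\mathbb Z^d$, are i.i.d. non-negative random variables with $w_{x,y}=w_{y,x}$, $\mathbb E[w_{x,y}]=1$ and $w_{x,y}\le M$ for a constant $M>0$. $\mu$ is counting measure on $\mathbb Z^d$, $B_R(y)=(y+(-R,R]^d)\cap\mathbb Z^d$, $B_R=B_R(0)$. For finite $U\subset\mathbb Z^d$ and $f:U\to\mathbb R$, $\mathscr E^\omega_U(f,f)=\frac12\sum_{x,y\in U,\,x\neq y}(f(x)-f(y))^2\frac{w_{x,y}(\omega)}{|x-y|^{d+\alpha}}$. *)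

theory Defs
  imports "HOL-Probability.Probability"
begin

text \<open>Points of Z^d are modelled as int^'d, with d = CARD('d).\<close>

text \<open>Unordered pairs of distinct points of Z^d (the index set of the conductances).\<close>
definition upairs :: "(int^'d) set set" where
  "upairs = {{x, y} | x y. x \<noteq> y}"

definition zdist :: "int^'d \<Rightarrow> int^'d \<Rightarrow> real" where
  "zdist x y = sqrt (\<Sum>i\<in>UNIV. (real_of_int (x$i - y$i))^2)"

definition zbox :: "real \<Rightarrow> int^'d \<Rightarrow> (int^'d) set" where
  "zbox R y = {x. \<forall>i. - R < real_of_int (x$i - y$i) \<and> real_of_int (x$i - y$i) \<le> R}"

definition energy ::
  "(int^'d) set \<Rightarrow> ((int^'d) set \<Rightarrow> 'a \<Rightarrow> real) \<Rightarrow> 'a \<Rightarrow> real \<Rightarrow> (int^'d \<Rightarrow> real) \<Rightarrow> real" where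
  "energy U W \<omega> \<alpha> f = (1/2) * (\<Sum>x\<in>U. \<Sum>y\<in>U - {x}.
      (f x - f y)^2 * W {x, y} \<omega> / zdist x y powr (real CARD('d) + \<alpha>))"

end

theory Submission
  imports Defs
begin

definition ibox :: "int \<Rightarrow> int \<Rightarrow> int^'d \<Rightarrow> (int^'d) set" where
  "ibox l u y = {x. \<forall>i. l \<le> x$i - y$i \<and> x$i - y$i \<le> u}"

lemma card_ibox:
  assumes "l \<le> u + 1"
  shows "card (ibox l u (y::int^'d)) = nat (u - l + 1) ^ CARD('d)"
    and "finite (ibox l u y)"
proof -
  define A where "A = (\<lambda>i::'d. {y$i + l .. y$i + u})"
  have bij: "bij_betw vec_lambda (PiE UNIV A) (ibox l u y)"
  proof (intro bij_betwI[of _ _ _ vec_nth])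
    have mem: "x \<in> ibox l u y \<longleftrightarrow> (\<forall>i. x$i \<in> A i)" for x
      unfolding ibox_def A_def by (auto simp: algebra_simps)
    show "vec_lambda \<in> PiE UNIV A \<rightarrow> ibox l u y" using mem by (auto simp: PiE_iff)
    show "vec_nth \<in> ibox l u y \<rightarrow> PiE UNIV A" using mem by (auto simp: PiE_iff)
  qed (auto simp: PiE_iff vec_eq_iff)
  have "card (PiE UNIV A) = nat (u - l + 1) ^ CARD('d)"
    by (subst card_PiE) (auto simp: A_def)
  then show "card (ibox l u y) = nat (u - l + 1) ^ CARD('d)"
    using bij_betw_same_card[OF bij] by simp
  show "finite (ibox l u y)"
    using bij_betw_finite[OF bij] by (simp add: finite_PiE A_def)
qed

lemma zbox_ibox:
  "zbox r y = ibox (1 - \<lceil>r\<rceil>) \<lfloor>r\<rfloor> y"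
proof -
  have eq: "(- r < real_of_int k \<and> real_of_int k \<le> r) \<longleftrightarrow> (1 - \<lceil>r\<rceil> \<le> k \<and> k \<le> \<lfloor>r\<rfloor>)" for k
  proof -
    have a: "k \<le> \<lfloor>r\<rfloor> \<longleftrightarrow> real_of_int k \<le> r" by (simp add: le_floor_iff)
    have b: "-k < \<lceil>r\<rceil> \<longleftrightarrow> real_of_int (-k) < r" by (rule less_ceiling_iff)
    have c: "1 - \<lceil>r\<rceil> \<le> k \<longleftrightarrow> -k < \<lceil>r\<rceil>" by auto
    have d: "real_of_int (-k) < r \<longleftrightarrow> - r < real_of_int k" by auto
    show ?thesis unfolding a c b d by simp
  qed
  show ?thesis unfolding zbox_def ibox_def by (simp only: eq)
qed

lemma zbox_finite: "finite (zbox r y)"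
proof -
  have "zbox r y = ibox (1 - \<lceil>r\<rceil>) \<lfloor>r\<rfloor> y" by (rule zbox_ibox)
  show ?thesis
  proof (cases "1 - \<lceil>r\<rceil> \<le> \<lfloor>r\<rfloor> + 1")
    case True then show ?thesis using card_ibox(2) zbox_ibox by metis
  next
    case False
    then have "zbox r y = {}" unfolding zbox_ibox ibox_def by (auto simp: not_le)
    then show ?thesis by simp
  qed
qed

lemma zbox_card:
  assumes "r \<ge> 1"
  shows "card (zbox r (y::int^'d)) = nat (\<lfloor>r\<rfloor> + \<lceil>r\<rceil>) ^ CARD('d)"
    and "r ^ CARD('d) \<le> real (card (zbox r y))"
proof -
  have le: "1 - \<lceil>r\<rceil> \<le> \<lfloor>r\<rfloor> + 1" using assms
    using floor_le_ceiling[of r] one_le_floor[of r] by linarith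
  show c: "card (zbox r (y::int^'d)) = nat (\<lfloor>r\<rfloor> + \<lceil>r\<rceil>) ^ CARD('d)"
    unfolding zbox_ibox card_ibox(1)[OF le] by simp
  have "r \<le> real_of_int (\<lfloor>r\<rfloor> + \<lceil>r\<rceil>)"
  proof -
    have "r < real_of_int \<lfloor>r\<rfloor> + 1" "r \<le> real_of_int \<lceil>r\<rceil>"
      using floor_correct[of r] le_of_int_ceiling[of r] by auto
    then show ?thesis using assms by (simp only: of_int_add)
  qed
  then have "r \<le> real (nat (\<lfloor>r\<rfloor> + \<lceil>r\<rceil>))" by linarith
  then show "r ^ CARD('d) \<le> real (card (zbox r y))"
    unfolding c using assms by (simp add: power_mono)
qed

lemma zbox_mono: "r \<le> s \<Longrightarrow> x \<in> zbox r y \<Longrightarrow> x \<in> zbox s y"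
proof -
  assume a: "r \<le> s" "x \<in> zbox r y"
  show ?thesis unfolding zbox_def
  proof (intro CollectI allI)
    fix i
    from a(2) have "- r < real_of_int (x$i - y$i) \<and> real_of_int (x$i - y$i) \<le> r" unfolding zbox_def by blast
    with a(1) show "- s < real_of_int (x$i - y$i) \<and> real_of_int (x$i - y$i) \<le> s" by linarith
  qed
qed

lemma zdist_sym: "zdist x y = zdist y x"
  unfolding zdist_def by (simp add: power2_commute)

lemma zdist_pos: "x \<noteq> y \<Longrightarrow> zdist x y > 0"
proof -
  assume "x \<noteq> y"
  then obtain i where "x$i \<noteq> y$i" by (auto simp: vec_eq_iff)
  then have "(real_of_int (x$i - y$i))^2 > 0" by simp
  moreover have "(real_of_int (x$i - y$i))^2 \<le> (\<Sum>j\<in>UNIV. (real_of_int (x$j - y$j))^2)"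
    by (rule member_le_sum) auto
  ultimately have "0 < (\<Sum>j\<in>UNIV. (real_of_int (x$j - y$j))^2)" by (rule less_le_trans)
  then show ?thesis unfolding zdist_def by simp
qed

lemma zdist_zbox:
  fixes x z y :: "int^'d"
  assumes "x \<in> zbox r y" "z \<in> zbox r y"
  shows "zdist x z \<le> 2 * r * sqrt (real CARD('d))"
proof -
  have sq: "(real_of_int (x$i - z$i))^2 \<le> (2 * r)^2" for i
  proof -
    have a: "- r < real_of_int (x$i - y$i)" "real_of_int (x$i - y$i) \<le> r"
      using assms(1) unfolding zbox_def by auto
    have b: "- r < real_of_int (z$i - y$i)" "real_of_int (z$i - y$i) \<le> r"
      using assms(2) unfolding zbox_def by auto
    have e: "real_of_int (x$i - z$i) = real_of_int (x$i - y$i) - real_of_int (z$i - y$i)" by simp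
    have "\<bar>real_of_int (x$i - z$i)\<bar> \<le> 2 * r" unfolding e using a b by linarith
    then have "\<bar>real_of_int (x$i - z$i)\<bar>^2 \<le> (2 * r)^2" by (intro power_mono) auto
    then show ?thesis by simp
  qed
  have r0: "r \<ge> 0"
  proof -
    have "- r < real_of_int (x$undefined - y$undefined)" "real_of_int (x$undefined - y$undefined) \<le> r"
      using assms(1) unfolding zbox_def by auto
    then show ?thesis by linarith
  qed
  have "(\<Sum>j\<in>(UNIV::'d set). (real_of_int (x$j - z$j))^2) \<le> (\<Sum>j\<in>(UNIV::'d set). (2 * r)^2)"
    by (intro sum_mono sq)
  also have "\<dots> = (2 * r * sqrt (real CARD('d)))^2" by (simp add: power_mult_distrib)
  finally have "zdist x z \<le> sqrt ((2 * r * sqrt (real CARD('d)))^2)"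
    unfolding zdist_def by (rule real_sqrt_le_mono)
  also have "\<dots> = 2 * r * sqrt (real CARD('d))" using r0 by simp
  finally show ?thesis .
qed


definition ind :: "real \<Rightarrow> real" where "ind t = (if 1/2 \<le> t then 1 else 0)"

definition cnt :: "((int^'d) set \<Rightarrow> 'a \<Rightarrow> real) \<Rightarrow> 'a \<Rightarrow> int^'d \<Rightarrow> int^'d \<Rightarrow> (int^'d) set \<Rightarrow> real" where
  "cnt W \<omega> x y S = (\<Sum>z\<in>S - {x,y}. ind (W {x,z} \<omega>) * ind (W {z,y} \<omega>))"

lemma ind_01: "ind t = 0 \<or> ind t = 1" "0 \<le> ind t" "ind t \<le> 1"
  unfolding ind_def by auto

lemma variance_identity:
  fixes f :: "'b \<Rightarrow> real"
  assumes "finite S" "card S > 0"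
  shows "(\<Sum>x\<in>S. (f x)^2) / real (card S) - ((\<Sum>x\<in>S. f x) / real (card S))^2
       = (\<Sum>x\<in>S. \<Sum>y\<in>S - {x}. (f x - f y)^2) / (2 * (real (card S))^2)"
proof -
  define N where "N = real (card S)"
  have N: "N > 0" using assms by (simp add: N_def)
  have rm: "(\<Sum>y\<in>S - {x}. (f x - f y)^2) = (\<Sum>y\<in>S. (f x - f y)^2)" if "x \<in> S" for x
    using that assms(1) by (simp add: sum.remove[of S x "\<lambda>y. (f x - f y)^2"])
  have "(\<Sum>x\<in>S. \<Sum>y\<in>S. (f x - f y)^2) = (\<Sum>x\<in>S. \<Sum>y\<in>S. (f x)^2 + (f y)^2 - 2 * (f x * f y))"
    by (simp add: power2_diff algebra_simps)
  also have "\<dots> = (\<Sum>x\<in>S. N * (f x)^2 + (\<Sum>y\<in>S. (f y)^2) - 2 * (f x * (\<Sum>y\<in>S. f y)))"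
    by (simp add: sum.distrib sum_subtractf sum_distrib_left N_def)
  also have "\<dots> = 2 * N * (\<Sum>x\<in>S. (f x)^2) - 2 * (\<Sum>x\<in>S. f x)^2"
    by (simp add: sum.distrib sum_subtractf sum_distrib_left sum_distrib_right N_def power2_eq_square algebra_simps)
  finally have *: "(\<Sum>x\<in>S. \<Sum>y\<in>S - {x}. (f x - f y)^2) = 2 * N * (\<Sum>x\<in>S. (f x)^2) - 2 * (\<Sum>x\<in>S. f x)^2"
    using rm by (simp cong: sum.cong)
  show ?thesis unfolding * N_def[symmetric] using N
    by (simp add: field_simps power2_eq_square)
qed

lemma det_poincare:
  fixes S :: "(int^'d) set" and f :: "int^'d \<Rightarrow> real" and W :: "(int^'d) set \<Rightarrow> 'a \<Rightarrow> real"
  assumes fin: "finite S" and Npos: "card S > 0"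
    and Wnn: "\<And>x z. x \<in> S \<Longrightarrow> z \<in> S \<Longrightarrow> x \<noteq> z \<Longrightarrow> 0 \<le> W {x,z} \<omega>"
    and good: "\<And>x y. x \<in> S \<Longrightarrow> y \<in> S \<Longrightarrow> x \<noteq> y \<Longrightarrow> \<kappa> * real (card S) \<le> cnt W \<omega> x y S"
    and dist: "\<And>x z. x \<in> S \<Longrightarrow> z \<in> S \<Longrightarrow> zdist x z \<le> D"
    and kappa: "\<kappa> > 0" and alpha: "\<alpha> > 0"
  shows "(\<Sum>x\<in>S. (f x)^2) / real (card S) - ((\<Sum>x\<in>S. f x) / real (card S))^2
       \<le> 8 * D powr (real CARD('d) + \<alpha>) / (\<kappa> * (real (card S))^2) * energy S W \<omega> \<alpha> f"
proof -
  define s where "s = real CARD('d) + \<alpha>"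
  have s: "s > 0" using alpha by (simp add: s_def)
  define N where "N = real (card S)"
  have N: "N > 0" using Npos by (simp add: N_def)
  define t where "t x z = (f x - f z)^2 * W {x,z} \<omega> / zdist x z powr s" for x z
  define e where "e x = (\<Sum>z\<in>S - {x}. t x z)" for x
  define E where "E = energy S W \<omega> \<alpha> f"
  have E: "E = (1/2) * (\<Sum>x\<in>S. e x)"
    unfolding E_def energy_def e_def t_def s_def by simp
  have tnn: "0 \<le> t x z" if "x \<in> S" "z \<in> S" "x \<noteq> z" for x z
    unfolding t_def using Wnn[OF that] by simp
  have tsym: "t x z = t z x" for x z
    unfolding t_def by (simp only: zdist_sym[of x z] insert_commute[of x z] power2_commute[of "f x" "f z"])
  have enn: "0 \<le> e x" if "x \<in> S" for x
    unfolding e_def using tnn that by (intro sum_nonneg) auto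
  have "S \<noteq> {}" using Npos by auto
  then obtain x0 where "x0 \<in> S" by blast
  have "zdist x0 x0 = 0" unfolding zdist_def by simp
  then have Dpos: "D \<ge> 0" using dist[OF \<open>x0 \<in> S\<close> \<open>x0 \<in> S\<close>] by linarith
  define Ds where "Ds = D powr s"
  have Ds: "Ds \<ge> 0" unfolding Ds_def by simp
  have stepA: "ind (W {x,z} \<omega>) * (f x - f z)^2 \<le> 2 * Ds * t x z"
    if xz: "x \<in> S" "z \<in> S" "x \<noteq> z" for x z
  proof (cases "1/2 \<le> W {x,z} \<omega>")
    case True
    have zp: "zdist x z > 0" using zdist_pos xz(3) .
    have zD: "zdist x z powr s \<le> Ds" unfolding Ds_def
      using dist[OF xz(1,2)] zp s by (intro powr_mono2) auto
    have zps: "zdist x z powr s > 0" using zp by simp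
    have "(f x - f z)^2 * 1 \<le> (f x - f z)^2 * (2 * W {x,z} \<omega>)"
      using True by (intro mult_left_mono) auto
    then have "(f x - f z)^2 \<le> 2 * ((f x - f z)^2 * W {x,z} \<omega>)" by (simp add: algebra_simps)
    also have "\<dots> = 2 * (zdist x z powr s * t x z)" unfolding t_def using zps by simp
    also have "\<dots> \<le> 2 * (Ds * t x z)"
      using zD tnn[OF xz] by (intro mult_left_mono mult_right_mono) auto
    finally show ?thesis using True by (simp add: ind_def)
  next
    case False
    then show ?thesis using tnn[OF xz] Ds by (simp add: ind_def)
  qed
  have stepB: "\<kappa> * N * (f x - f y)^2 \<le> 4 * Ds * (e x + e y)"
    if xy: "x \<in> S" "y \<in> S" "x \<noteq> y" for x y
  proof -
    define Z where "Z = S - {x,y}"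
    have finZ: "finite Z" using fin by (simp add: Z_def)
    have "\<kappa> * N * (f x - f y)^2 \<le> cnt W \<omega> x y S * (f x - f y)^2"
      using good[OF xy] by (intro mult_right_mono) (auto simp: N_def)
    also have "\<dots> = (\<Sum>z\<in>Z. ind (W {x,z} \<omega>) * ind (W {z,y} \<omega>) * (f x - f y)^2)"
      unfolding cnt_def Z_def by (simp add: sum_distrib_right)
    also have "\<dots> \<le> (\<Sum>z\<in>Z. 2 * (ind (W {x,z} \<omega>) * (f x - f z)^2) + 2 * (ind (W {z,y} \<omega>) * (f z - f y)^2))"
    proof (intro sum_mono)
      fix z assume "z \<in> Z"
      have tri: "(f x - f y)^2 \<le> 2 * (f x - f z)^2 + 2 * (f z - f y)^2"
      proof -
        have "2 * (f x - f z)^2 + 2 * (f z - f y)^2 - (f x - f y)^2 = (f x - 2 * f z + f y)^2"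
          by (simp add: power2_eq_square algebra_simps)
        moreover have "0 \<le> (f x - 2 * f z + f y)^2" by simp
        ultimately show ?thesis by linarith
      qed
      show "ind (W {x,z} \<omega>) * ind (W {z,y} \<omega>) * (f x - f y)^2 \<le> 2 * (ind (W {x,z} \<omega>) * (f x - f z)^2) + 2 * (ind (W {z,y} \<omega>) * (f z - f y)^2)"
        using ind_01[of "W {x,z} \<omega>"] ind_01[of "W {z,y} \<omega>"] tri
        by (auto simp: zero_le_power2) 
    qed
    also have "\<dots> \<le> (\<Sum>z\<in>Z. 2 * (2 * Ds * t x z) + 2 * (2 * Ds * t y z))"
    proof (intro sum_mono add_mono mult_left_mono)
      fix z assume z: "z \<in> Z"
      then have zS: "z \<in> S" "z \<noteq> x" "z \<noteq> y" by (auto simp: Z_def)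
      show "ind (W {x,z} \<omega>) * (f x - f z)^2 \<le> 2 * Ds * t x z" using stepA xy zS by auto
      have "ind (W {y,z} \<omega>) * (f y - f z)^2 \<le> 2 * Ds * t y z" using stepA xy zS by auto
      then show "ind (W {z,y} \<omega>) * (f z - f y)^2 \<le> 2 * Ds * t y z"
        by (simp add: insert_commute power2_commute)
    qed auto
    also have "\<dots> = (\<Sum>z\<in>Z. (4 * Ds) * t x z + (4 * Ds) * t y z)"
      by (intro sum.cong refl) (simp add: algebra_simps)
    also have "\<dots> = 4 * Ds * (\<Sum>z\<in>Z. t x z) + 4 * Ds * (\<Sum>z\<in>Z. t y z)"
      by (simp only: sum.distrib sum_distrib_left[symmetric])
    also have "\<dots> \<le> 4 * Ds * e x + 4 * Ds * e y"
    proof (intro add_mono mult_left_mono)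
      show "(\<Sum>z\<in>Z. t x z) \<le> e x" unfolding e_def
        using fin tnn xy by (intro sum_mono2) (auto simp: Z_def)
      show "(\<Sum>z\<in>Z. t y z) \<le> e y" unfolding e_def
        using fin tnn xy by (intro sum_mono2) (auto simp: Z_def)
    qed (use Ds in auto)
    finally show ?thesis by (simp add: algebra_simps)
  qed
  define Q where "Q = (\<Sum>x\<in>S. \<Sum>y\<in>S - {x}. (f x - f y)^2)"
  have "\<kappa> * N * Q = (\<Sum>x\<in>S. \<Sum>y\<in>S - {x}. \<kappa> * N * (f x - f y)^2)"
    unfolding Q_def by (simp add: sum_distrib_left)
  also have "\<dots> \<le> (\<Sum>x\<in>S. \<Sum>y\<in>S - {x}. 4 * Ds * (e x + e y))"
    using stepB by (intro sum_mono) auto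
  also have "\<dots> = 4 * Ds * (\<Sum>x\<in>S. (N - 1) * e x + ((\<Sum>y\<in>S. e y) - e x))"
  proof -
    have inner: "(\<Sum>y\<in>S - {x}. e x + e y) = (N - 1) * e x + ((\<Sum>y\<in>S. e y) - e x)" if x: "x \<in> S" for x
    proof -
      have "card (S - {x}) = card S - 1" using x by (simp add: card_Diff_singleton)
      then have "card (S - {x}) + 1 = card S" using Npos by linarith
      then have c: "real (card (S - {x})) = N - 1" unfolding N_def by linarith
      have "(\<Sum>y\<in>S - {x}. e x + e y) = real (card (S - {x})) * e x + (\<Sum>y\<in>S - {x}. e y)"
        by (simp add: sum.distrib)
      also have "(\<Sum>y\<in>S - {x}. e y) = (\<Sum>y\<in>S. e y) - e x"
        using x fin by (simp add: sum_diff1)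
      finally show ?thesis unfolding c .
    qed
    have "(\<Sum>x\<in>S. \<Sum>y\<in>S - {x}. 4 * Ds * (e x + e y)) = (\<Sum>x\<in>S. 4 * Ds * ((N - 1) * e x + ((\<Sum>y\<in>S. e y) - e x)))"
      by (intro sum.cong refl) (simp add: sum_distrib_left[symmetric] inner)
    then show ?thesis by (simp add: sum_distrib_left)
  qed
  also have "\<dots> = 4 * Ds * (2 * (N - 1) * (\<Sum>x\<in>S. e x))"
  proof -
    have "(\<Sum>x\<in>S. (N - 1) * e x + ((\<Sum>y\<in>S. e y) - e x)) = (N - 1) * (\<Sum>x\<in>S. e x) + (N * (\<Sum>y\<in>S. e y) - (\<Sum>x\<in>S. e x))"
      by (simp add: sum.distrib sum_subtractf sum_distrib_left[symmetric] N_def)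
    show ?thesis unfolding \<open>(\<Sum>x\<in>S. (N - 1) * e x + ((\<Sum>y\<in>S. e y) - e x)) = _\<close> by (simp add: algebra_simps)
  qed
  also have "\<dots> \<le> 4 * Ds * (2 * N * (\<Sum>x\<in>S. e x))"
    using Ds enn by (intro mult_left_mono mult_right_mono sum_nonneg) auto
  also have "\<dots> = \<kappa> * N * (16 * Ds * E / \<kappa>)" unfolding E using kappa by simp
  finally have "(\<kappa> * N) * Q \<le> (\<kappa> * N) * (16 * Ds * E / \<kappa>)" .
  then have "Q \<le> 16 * Ds * E / \<kappa>"
    by (rule mult_left_le_imp_le) (use kappa N in auto)
  then have "Q / (2 * N^2) \<le> (16 * Ds * E / \<kappa>) / (2 * N^2)"
    using N by (intro divide_right_mono) auto
  also have "\<dots> = 8 * Ds / (\<kappa> * N^2) * E" by (simp add: field_simps)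
  finally have fin2: "Q / (2 * N^2) \<le> 8 * Ds / (\<kappa> * N^2) * E" .
  have V: "(\<Sum>x\<in>S. (f x)^2) / real (card S) - ((\<Sum>x\<in>S. f x) / real (card S))^2 = Q / (2 * N^2)"
    unfolding Q_def N_def by (rule variance_identity[OF fin Npos])
  show ?thesis unfolding V using fin2 by (simp add: N_def E_def Ds_def s_def)
qed


lemma upairsI: "x \<noteq> z \<Longrightarrow> {x, z} \<in> upairs"
  unfolding upairs_def by blast

lemma ind_borel[measurable]: "ind \<in> borel_measurable borel"
  unfolding ind_def by measurable

context prob_space
begin

lemma ind_W_meas:
  assumes "W e \<in> borel_measurable M"
  shows "(\<lambda>\<omega>. ind (W e \<omega>)) \<in> borel_measurable M"
  using measurable_compose[OF assms ind_borel] by (simp add: comp_def)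

lemma ind_expect:
  assumes meas: "W e \<in> borel_measurable M"
    and bnd: "\<forall>\<omega>\<in>space M. 0 \<le> W e \<omega> \<and> W e \<omega> \<le> B"
    and int1: "integral\<^sup>L M (W e) = 1" and B: "B > 0"
  shows "expectation (\<lambda>\<omega>. ind (W e \<omega>)) \<ge> 1 / (2 * B)"
proof -
  have im: "(\<lambda>\<omega>. ind (W e \<omega>)) \<in> borel_measurable M" by (rule ind_W_meas[where W=W and e=e, OF meas])
  have intI: "integrable M (\<lambda>\<omega>. ind (W e \<omega>))"
    by (rule integrable_const_bound[where B=1]) (use im in \<open>auto simp: ind_def\<close>)
  have intW: "integrable M (W e)"
    by (rule integrable_const_bound[where B=B]) (use meas bnd in auto)
  have "1 = integral\<^sup>L M (W e)" using int1 by simp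
  also have "\<dots> \<le> integral\<^sup>L M (\<lambda>\<omega>. 1/2 + B * ind (W e \<omega>))"
  proof (rule integral_mono)
    show "integrable M (\<lambda>\<omega>. 1/2 + B * ind (W e \<omega>))" using intI by auto
    fix \<omega> assume "\<omega> \<in> space M"
    then show "W e \<omega> \<le> 1/2 + B * ind (W e \<omega>)" using bnd by (auto simp: ind_def)
  qed (rule intW)
  also have "\<dots> = 1/2 + B * expectation (\<lambda>\<omega>. ind (W e \<omega>))"
    using intI by (simp add: prob_space)
  finally have "1/2 \<le> B * expectation (\<lambda>\<omega>. ind (W e \<omega>))" by simp
  then show ?thesis using B by (simp add: field_simps)
qed

lemma ind_pair_expect:
  fixes W :: "(int^'d) set \<Rightarrow> 'a \<Rightarrow> real"
  assumes indep: "indep_vars (\<lambda>_. borel) W upairs"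
    and e: "e1 \<in> upairs" "e2 \<in> upairs" "e1 \<noteq> e2"
  shows "expectation (\<lambda>\<omega>. ind (W e1 \<omega>) * ind (W e2 \<omega>))
       = expectation (\<lambda>\<omega>. ind (W e1 \<omega>)) * expectation (\<lambda>\<omega>. ind (W e2 \<omega>))"
proof -
  have ind2: "indep_vars (\<lambda>_. borel) (\<lambda>e \<omega>. ind (W e \<omega>)) {e1, e2}"
    using indep_vars_subset[OF indep_vars_compose2[OF indep, of "\<lambda>_. ind" "\<lambda>_. borel"], of "{e1,e2}"] e
    by auto
  have im: "(\<lambda>\<omega>. ind (W e \<omega>)) \<in> borel_measurable M" if "e \<in> upairs" for e
    using indep that unfolding indep_vars_def by (intro ind_W_meas) auto
  have "expectation (\<lambda>\<omega>. \<Prod>e\<in>{e1,e2}. ind (W e \<omega>)) = (\<Prod>e\<in>{e1,e2}. expectation (\<lambda>\<omega>. ind (W e \<omega>)))"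
  proof (rule indep_vars_lebesgue_integral)
    show "finite {e1, e2}" by simp
    show "indep_vars (\<lambda>_. borel) (\<lambda>e \<omega>. ind (W e \<omega>)) {e1, e2}" by (rule ind2)
    fix e assume "e \<in> {e1, e2}"
    then have "e \<in> upairs" using e by auto
    then show "integrable M (\<lambda>\<omega>. ind (W e \<omega>))"
      by (intro integrable_const_bound[where B=1]) (use im in \<open>auto simp: ind_def\<close>)
  qed
  then show ?thesis using e by simp
qed

end


context prob_space
begin

lemma cnt_meas:
  fixes W :: "(int^'d) set \<Rightarrow> 'a \<Rightarrow> real"
  assumes meas: "\<forall>e\<in>upairs. W e \<in> borel_measurable M"
  shows "(\<lambda>\<omega>. cnt W \<omega> x y S) \<in> borel_measurable M"
proof -
  have "(\<lambda>\<omega>. ind (W {x,z} \<omega>) * ind (W {z,y} \<omega>)) \<in> borel_measurable M" if "z \<in> S - {x,y}" for z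
  proof -
    have "{x,z} \<in> upairs" "{z,y} \<in> upairs" using that by (auto intro!: upairsI)
    then show ?thesis using meas by (intro borel_measurable_times ind_W_meas) auto
  qed
  then show ?thesis unfolding cnt_def by (rule borel_measurable_sum)
qed

lemma pair_bound:
  fixes W :: "(int^'d) set \<Rightarrow> 'a \<Rightarrow> real"
  assumes meas: "\<forall>e\<in>upairs. W e \<in> borel_measurable M"
    and indep: "indep_vars (\<lambda>_. borel) W upairs"
    and bnd: "\<forall>e\<in>upairs. \<forall>\<omega>\<in>space M. 0 \<le> W e \<omega> \<and> W e \<omega> \<le> B"
    and int1: "\<forall>e\<in>upairs. integral\<^sup>L M (W e) = 1" and B: "B > 0"
    and S: "finite S" "x \<in> S" "y \<in> S" "x \<noteq> y" "card S \<ge> 4"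
  shows "prob {\<omega>\<in>space M. cnt W \<omega> x y S < (1/(2*B))^2/4 * real (card S)}
         \<le> exp (- ((1/(2*B))^4/4) * real (card S))"
proof -
  define p where "p = 1/(2*B)"
  have p: "p > 0" using B by (simp add: p_def)
  define Z where "Z = S - {x,y}"
  have finZ: "finite Z" using S by (simp add: Z_def)
  have cardZ: "card Z = card S - 2" using S by (simp add: Z_def card_Diff_subset)
  define N where "N = real (card S)"
  have N4: "N \<ge> 4" using S by (simp add: N_def)
  have cZ: "real (card Z) = N - 2" using cardZ S by (simp add: N_def of_nat_diff)
  define X where "X z \<omega> = ind (W {x,z} \<omega>) * ind (W {z,y} \<omega>)" for z \<omega>
  have zZ: "z \<noteq> x" "z \<noteq> y" "z \<in> S" if "z \<in> Z" for z using that by (auto simp: Z_def)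
  define K where "K z = {{x,z},{z,y}}" for z
  have indR: "indep_vars (\<lambda>z. PiM (K z) (\<lambda>_. borel)) (\<lambda>z \<omega>. restrict (\<lambda>i. W i \<omega>) (K z)) Z"
  proof (rule indep_vars_restrict[OF indep])
    fix z assume "z \<in> Z"
    then show "K z \<subseteq> upairs" using zZ by (auto simp: K_def intro!: upairsI)
  next
    show "disjoint_family_on K Z"
      unfolding disjoint_family_on_def K_def
      using S(4) by (auto simp: Z_def doubleton_eq_iff)
  qed
  have indX: "indep_vars (\<lambda>_. borel) X Z"
  proof -
    have "indep_vars (\<lambda>_. borel) (\<lambda>z \<omega>. (\<lambda>v. ind (v {x,z}) * ind (v {z,y})) (restrict (\<lambda>i. W i \<omega>) (K z))) Z"
    proof (rule indep_vars_compose2[OF indR])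
      fix z assume "z \<in> Z"
      have c1: "(\<lambda>v. v {x,z}) \<in> borel_measurable (PiM (K z) (\<lambda>_. borel))"
        by (rule measurable_component_singleton) (simp add: K_def)
      have c2: "(\<lambda>v. v {z,y}) \<in> borel_measurable (PiM (K z) (\<lambda>_. borel))"
        by (rule measurable_component_singleton) (simp add: K_def)
      show "(\<lambda>v. ind (v {x,z}) * ind (v {z,y})) \<in> borel_measurable (PiM (K z) (\<lambda>_. borel))"
        using measurable_compose[OF c1 ind_borel] measurable_compose[OF c2 ind_borel]
        by (intro borel_measurable_times) (auto simp: comp_def)
    qed
    moreover have "(\<lambda>z \<omega>. (\<lambda>v. ind (v {x,z}) * ind (v {z,y})) (restrict (\<lambda>i. W i \<omega>) (K z))) = X"
      by (auto simp: X_def K_def fun_eq_iff)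
    ultimately show ?thesis by simp
  qed
  have EX: "expectation (X z) \<ge> p^2" if "z \<in> Z" for z
  proof -
    have u: "{x,z} \<in> upairs" "{z,y} \<in> upairs" "{x,z} \<noteq> {z,y}"
      using zZ[OF that] S(4) by (auto intro!: upairsI simp: doubleton_eq_iff)
    have e1: "expectation (\<lambda>\<omega>. ind (W {x,z} \<omega>)) \<ge> p"
      unfolding p_def using meas bnd int1 u B by (intro ind_expect) auto
    have e2: "expectation (\<lambda>\<omega>. ind (W {z,y} \<omega>)) \<ge> p"
      unfolding p_def using meas bnd int1 u B by (intro ind_expect) auto
    have "expectation (X z) = expectation (\<lambda>\<omega>. ind (W {x,z} \<omega>)) * expectation (\<lambda>\<omega>. ind (W {z,y} \<omega>))"
      unfolding X_def by (rule ind_pair_expect[OF indep u])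
    also have "\<dots> \<ge> p * p" using e1 e2 p by (intro mult_mono) auto
    finally show ?thesis by (simp add: power2_eq_square)
  qed
  define \<mu> where "\<mu> = (\<Sum>z\<in>Z. expectation (X z))"
  have mu: "\<mu> \<ge> p^2 * (N - 2)"
  proof -
    have "(\<Sum>z\<in>Z. p^2) \<le> \<mu>" unfolding \<mu>_def using EX by (intro sum_mono) auto
    then show ?thesis using cZ by (simp add: mult.commute)
  qed
  interpret H: Hoeffding_ineq M Z X "\<lambda>_. 0" "\<lambda>_. 1" \<mu>
  proof unfold_locales
    show "finite Z" by (rule finZ)
    show "indep_vars (\<lambda>_. borel) X Z" by (rule indX)
    fix z assume "z \<in> Z"
    show "AE \<omega> in M. X z \<omega> \<in> {0..1}"
      by (intro AE_I2) (auto simp: X_def ind_def)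
  qed (simp add: \<mu>_def)
  define \<epsilon> where "\<epsilon> = p^2 * (N - 2) / 2"
  have eps: "\<epsilon> \<ge> 0" using N4 by (simp add: \<epsilon>_def)
  have sumpos: "(\<Sum>i\<in>Z. (1 - 0)\<^sup>2) > (0::real)" using cZ N4 by simp
  have H: "prob {\<omega>\<in>space M. (\<Sum>z\<in>Z. X z \<omega>) \<le> \<mu> - \<epsilon>} \<le> exp (-2 * \<epsilon>^2 / (\<Sum>i\<in>Z. (1 - 0)\<^sup>2))"
    by (rule H.Hoeffding_ineq_le[OF eps sumpos])
  have Xm: "X z \<in> borel_measurable M" if "z \<in> Z" for z
    using indX that unfolding indep_vars_def by auto
  have sub: "{\<omega>\<in>space M. cnt W \<omega> x y S < p^2/4 * N} \<subseteq> {\<omega>\<in>space M. (\<Sum>z\<in>Z. X z \<omega>) \<le> \<mu> - \<epsilon>}"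
  proof safe
    fix \<omega> assume "\<omega> \<in> space M" "cnt W \<omega> x y S < p^2/4 * N"
    moreover have "cnt W \<omega> x y S = (\<Sum>z\<in>Z. X z \<omega>)" unfolding cnt_def X_def Z_def by simp
    moreover have "p^2/4 * N \<le> \<mu> - \<epsilon>"
    proof -
      have "p^2/4 * N \<le> p^2 * (N - 2) / 2" using N4 p by (simp add: field_simps)
      also have "\<dots> = p^2 * (N - 2) - \<epsilon>" by (simp add: \<epsilon>_def)
      also have "\<dots> \<le> \<mu> - \<epsilon>" using mu by simp
      finally show ?thesis .
    qed
    ultimately show "(\<Sum>z\<in>Z. X z \<omega>) \<le> \<mu> - \<epsilon>" by simp
  qed
  have "prob {\<omega>\<in>space M. cnt W \<omega> x y S < p^2/4 * N} \<le> prob {\<omega>\<in>space M. (\<Sum>z\<in>Z. X z \<omega>) \<le> \<mu> - \<epsilon>}"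
    by (rule finite_measure_mono[OF sub]) (use Xm in measurable)
  also have "\<dots> \<le> exp (-2 * \<epsilon>^2 / (\<Sum>i\<in>Z. (1 - 0)\<^sup>2))" by (rule H)
  also have "-2 * \<epsilon>^2 / (\<Sum>i\<in>Z. (1 - 0)\<^sup>2) = - (p^4/2) * (N - 2)"
  proof -
    have s1: "(\<Sum>i\<in>Z. (1 - 0)\<^sup>2) = N - 2" using cZ by simp
    have e2: "\<epsilon>^2 = p^4 * (N - 2)^2 / 4"
      by (simp add: \<epsilon>_def power_divide power_mult_distrib flip: power_mult)
    have gen: "t > 0 \<Longrightarrow> -2 * (A * t^2 / 4) / t = - (A/2) * t" for t A :: real
      by (simp add: power2_eq_square field_simps)
    show ?thesis unfolding s1 e2 using N4 by (intro gen) simp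
  qed
  also have "exp (- (p^4/2) * (N - 2)) \<le> exp (- (p^4/4) * N)"
  proof -
    have "(p^4/4) * N \<le> (p^4/2) * (N - 2)" using N4 p by (simp add: field_simps)
    then show ?thesis by simp
  qed
  finally show ?thesis unfolding p_def N_def .
qed

end


definition Bad :: "((int^'d) set \<Rightarrow> 'a \<Rightarrow> real) \<Rightarrow> 'a measure \<Rightarrow> real \<Rightarrow> (int^'d) set \<Rightarrow> 'a set" where
  "Bad W P \<kappa> S = (\<Union>xy \<in> {xy. fst xy \<in> S \<and> snd xy \<in> S \<and> fst xy \<noteq> snd xy}.
      {\<omega>\<in>space P. cnt W \<omega> (fst xy) (snd xy) S < \<kappa> * real (card S)})"

context prob_space
begin

lemma Bad_sets:
  fixes W :: "(int^'d) set \<Rightarrow> 'a \<Rightarrow> real"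
  assumes meas: "\<forall>e\<in>upairs. W e \<in> borel_measurable M" and S: "finite S"
  shows "Bad W M \<kappa> S \<in> events"
proof -
  have fin: "finite {xy. fst xy \<in> S \<and> snd xy \<in> S \<and> fst xy \<noteq> snd xy}"
    by (rule finite_subset[of _ "S \<times> S"]) (use S in auto)
  have "{\<omega>\<in>space M. cnt W \<omega> x y S < \<kappa> * real (card S)} \<in> events" for x y
    using cnt_meas[OF meas, of x y S] by measurable
  then show ?thesis unfolding Bad_def using fin by (intro sets.finite_UN) auto
qed

lemma Bad_bound:
  fixes W :: "(int^'d) set \<Rightarrow> 'a \<Rightarrow> real"
  assumes meas: "\<forall>e\<in>upairs. W e \<in> borel_measurable M"
    and indep: "indep_vars (\<lambda>_. borel) W upairs"
    and bnd: "\<forall>e\<in>upairs. \<forall>\<omega>\<in>space M. 0 \<le> W e \<omega> \<and> W e \<omega> \<le> B"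
    and int1: "\<forall>e\<in>upairs. integral\<^sup>L M (W e) = 1" and B: "B > 0"
    and S: "finite S" "card S \<ge> 4"
  shows "prob (Bad W M ((1/(2*B))^2/4) S) \<le> real (card S)^2 * exp (- ((1/(2*B))^4/4) * real (card S))"
proof -
  define I where "I = {xy. fst xy \<in> S \<and> snd xy \<in> S \<and> fst xy \<noteq> snd xy}"
  have IS: "I \<subseteq> S \<times> S" unfolding I_def by auto
  have fin: "finite I" by (rule finite_subset[OF IS]) (use S in auto)
  have cI: "card I \<le> card S ^ 2"
    using card_mono[OF _ IS] S by (simp add: card_cartesian_product power2_eq_square)
  have ev: "{\<omega>\<in>space M. cnt W \<omega> x y S < \<kappa> * real (card S)} \<in> events" for x y \<kappa>
    using cnt_meas[OF meas, of x y S] by measurable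
  have "prob (Bad W M ((1/(2*B))^2/4) S) \<le> (\<Sum>xy\<in>I. prob {\<omega>\<in>space M. cnt W \<omega> (fst xy) (snd xy) S < (1/(2*B))^2/4 * real (card S)})"
    unfolding Bad_def I_def[symmetric] by (rule measure_UNION_le[OF fin]) (rule ev)
  also have "\<dots> \<le> (\<Sum>xy\<in>I. exp (- ((1/(2*B))^4/4) * real (card S)))"
  proof (rule sum_mono)
    fix xy assume "xy \<in> I"
    then show "prob {\<omega>\<in>space M. cnt W \<omega> (fst xy) (snd xy) S < (1/(2*B))^2/4 * real (card S)}
        \<le> exp (- ((1/(2*B))^4/4) * real (card S))"
      unfolding I_def using S by (intro pair_bound[OF meas indep bnd int1 B]) auto
  qed
  also have "\<dots> = real (card I) * exp (- ((1/(2*B))^4/4) * real (card S))" by simp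
  also have "\<dots> \<le> real (card S)^2 * exp (- ((1/(2*B))^4/4) * real (card S))"
    using cI by (intro mult_right_mono) (auto simp flip: of_nat_power)
  finally show ?thesis .
qed

end

lemma powr_event:
  fixes a A :: real
  assumes "a > 0"
  shows "eventually (\<lambda>t. t powr a \<ge> A) at_top"
proof -
  define B where "B = (\<bar>A\<bar> + 1) powr (1/a)"
  have B: "B > 0" unfolding B_def by simp
  have key: "t powr a \<ge> A" if "t \<ge> B" for t
  proof -
    have "B powr a \<le> t powr a" using that B assms by (intro powr_mono2) auto
    moreover have "B powr a = \<bar>A\<bar> + 1" unfolding B_def using assms by (simp add: powr_powr)
    ultimately show ?thesis by linarith
  qed
  show ?thesis by (rule eventually_mono[OF eventually_ge_at_top[of B]]) (rule key)
qed

lemma tail_bound: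
  fixes \<theta> c :: real and d K :: nat
  assumes c: "c > 0" and d: "d \<ge> 1" and th: "\<theta> * real d > 1"
  shows "eventually (\<lambda>n. 4 \<le> \<lfloor>ln (real n) powr \<theta>\<rfloor> \<and>
     real (2*n+3)^K * exp (- c * (real_of_int \<lfloor>ln (real n) powr \<theta>\<rfloor>)^d) \<le> inverse (real n ^ 2)) sequentially"
proof -
  have thpos: "\<theta> > 0"
  proof (rule ccontr)
    assume "\<not> \<theta> > 0"
    then have "\<theta> * real d \<le> 0" using d by (simp add: mult_nonpos_nonneg)
    then show False using th by simp
  qed
  define Q where "Q = real K * ln 3 + real K + 2"
  define L where "L = Q * 2^d / c"
  have lnT: "filterlim (\<lambda>n. ln (real n)) at_top sequentially"
    by (rule filterlim_compose[OF ln_at_top filterlim_real_sequentially])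
  have e1: "eventually (\<lambda>t::real. t \<ge> 1) at_top" by (rule eventually_ge_at_top)
  have e2: "eventually (\<lambda>t. t powr \<theta> \<ge> 5) at_top" by (rule powr_event[OF thpos])
  have e3: "eventually (\<lambda>t. t powr (\<theta> * real d - 1) \<ge> L) at_top" by (rule powr_event) (use th in simp)
  have ev_t: "eventually (\<lambda>t::real. t \<ge> 1 \<and> t powr \<theta> \<ge> 5 \<and> t powr (\<theta> * real d - 1) \<ge> L) at_top"
    using e1 e2 e3 by (intro eventually_conj)
  have ev1: "eventually (\<lambda>n. ln (real n) \<ge> 1 \<and> ln (real n) powr \<theta> \<ge> 5 \<and> ln (real n) powr (\<theta> * real d - 1) \<ge> L) sequentially"
    using lnT ev_t unfolding filterlim_iff by blast
  show ?thesis
    using ev1 eventually_ge_at_top[of "3::nat"]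
  proof eventually_elim
    case (elim n)
    define t where "t = ln (real n)"
    have t1: "t \<ge> 1" and t5: "t powr \<theta> \<ge> 5" and tL: "t powr (\<theta> * real d - 1) \<ge> L"
      using elim by (auto simp: t_def)
    have n3: "n \<ge> 3" using elim by simp
    define m where "m = real_of_int \<lfloor>t powr \<theta>\<rfloor>"
    have m1: "m \<ge> t powr \<theta> - 1" unfolding m_def by linarith
    have m4: "4 \<le> \<lfloor>ln (real n) powr \<theta>\<rfloor>" using t5 unfolding t_def by linarith
    have mh: "m \<ge> t powr \<theta> / 2" using m1 t5 by linarith
    have md: "m ^ d \<ge> (t powr \<theta> / 2) ^ d" using mh t5 by (intro power_mono) auto
    have "(t powr \<theta> / 2) ^ d = t powr (\<theta> * real d) / 2^d"
    proof -
      have "(t powr \<theta>) ^ d = t powr (\<theta> * real d)"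
        using t1 by (simp add: powr_realpow[symmetric] powr_powr)
      then show ?thesis by (simp add: power_divide)
    qed
    also have "t powr (\<theta> * real d) = t powr (\<theta> * real d - 1) * t"
      using t1 by (simp add: powr_diff)
    finally have "m ^ d \<ge> t powr (\<theta> * real d - 1) * t / 2^d" using md by simp
    moreover have "t powr (\<theta> * real d - 1) * t / 2^d \<ge> L * t / 2^d"
      using tL t1 by (intro divide_right_mono mult_right_mono) auto
    ultimately have "m ^ d \<ge> L * t / 2^d" by linarith
    then have "c * m ^ d \<ge> c * (L * t / 2^d)" using c by (intro mult_left_mono) auto
    also have "c * (L * t / 2^d) = Q * t" unfolding L_def using c by (simp add: field_simps)
    finally have cm: "c * m ^ d \<ge> Q * t" .
    have Qt: "Q * t \<ge> real K * ln 3 + real (K + 2) * t"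
    proof -
      have "real K * ln 3 * 1 \<le> real K * ln 3 * t" using t1 by (intro mult_left_mono) auto
      then show ?thesis unfolding Q_def by (simp add: algebra_simps)
    qed
    have npos: "real n > 0" using n3 by simp
    have "real (2*n+3)^K \<le> (3 * real n)^K" using n3 by (intro power_mono) auto
    also have "(3 * real n)^K = exp (real K * ln 3 + real K * t)"
    proof -
      have "real K * ln 3 + real K * t = real K * ln (3 * real n)"
        unfolding t_def using npos by (simp add: ln_mult distrib_left)
      then have "exp (real K * ln 3 + real K * t) = exp (ln (3 * real n)) ^ K"
        by (simp only: exp_of_nat_mult)
      then show ?thesis using npos by simp
    qed
    finally have A: "real (2*n+3)^K \<le> exp (real K * ln 3 + real K * t)" .
    have "real (2*n+3)^K * exp (- c * m^d) \<le> exp (real K * ln 3 + real K * t) * exp (- (real K * ln 3 + real (K + 2) * t))"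
    proof (rule mult_mono)
      show "exp (- c * m ^ d) \<le> exp (- (real K * ln 3 + real (K + 2) * t))"
        using cm Qt by simp
    qed (use A in auto)
    also have "\<dots> = exp (- 2 * t)"
    proof -
      have "real K * ln 3 + real K * t + - (real K * ln 3 + real (K + 2) * t) = - 2 * t"
        by (simp add: algebra_simps)
      then show ?thesis by (simp only: exp_add[symmetric])
    qed
    also have "\<dots> = inverse (real n ^ 2)"
    proof -
      have et: "exp t = real n" unfolding t_def using npos by simp
      have "- 2 * t = - (t + t)" by simp
      then have "exp (- 2 * t) = inverse (exp t * exp t)" by (simp only: exp_minus exp_add)
      then show ?thesis unfolding et by (simp add: power2_eq_square)
    qed
    finally have calc: "real (2*n+3)^K * exp (- c * m^d) \<le> inverse (real n ^ 2)" .
    show ?case using m4 calc unfolding m_def t_def by blast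
  qed
qed


lemma energy_nonneg:
  assumes "\<And>x z. x \<in> U \<Longrightarrow> z \<in> U \<Longrightarrow> x \<noteq> z \<Longrightarrow> 0 \<le> W {x,z} \<omega>"
  shows "0 \<le> energy U W \<omega> \<alpha> f"
  unfolding energy_def using assms by (intro mult_nonneg_nonneg sum_nonneg divide_nonneg_nonneg) auto

lemma card_pos_d: "CARD('d::finite) > 0" by simp

theorem proposition2p2:
  fixes P :: "'a measure"
    and W :: "(int^'d) set \<Rightarrow> 'a \<Rightarrow> real"
    and M :: real and \<alpha> :: real
  assumes "prob_space P"
    and "\<forall>e\<in>upairs. W e \<in> borel_measurable P"
    and "prob_space.indep_vars P (\<lambda>_. borel) W upairs"
    and "\<forall>e\<in>upairs. \<forall>e'\<in>upairs. distr P borel (W e) = distr P borel (W e')"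
    and "\<forall>e\<in>upairs. \<forall>\<omega>\<in>space P. 0 \<le> W e \<omega> \<and> W e \<omega> \<le> M"
    and "\<forall>e\<in>upairs. integral\<^sup>L P (W e) = 1"
    and "M > 0"
    and "0 < \<alpha>" and "\<alpha> < 2"
  shows "\<exists>C1>0. \<forall>\<theta>::real. \<theta> > 1 / real CARD('d) \<longrightarrow>
    (\<exists>R0 :: 'a \<Rightarrow> ereal. R0 \<in> borel_measurable P \<and> (\<forall>\<omega>\<in>space P. 1 \<le> R0 \<omega>)
      \<and> (AE \<omega> in P. R0 \<omega> < \<infinity>)
      \<and> (AE \<omega> in P. \<forall>(f :: int^'d \<Rightarrow> real) (R::real) y (r::real).
            ereal R > R0 \<omega> \<and> y \<in> zbox R 0 \<and> (ln R) powr \<theta> \<le> r \<and> r \<le> R \<longrightarrow>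
            (\<Sum>x\<in>zbox r y. (f x)^2) / real (card (zbox r y))
              - ((\<Sum>x\<in>zbox r y. f x) / real (card (zbox r y)))^2
            \<le> C1 * r powr (\<alpha> - real CARD('d)) * energy (zbox r y) W \<omega> \<alpha> f))"
proof -
  interpret prob_space P by (rule assms(1))
  note meas = assms(2) and indep = assms(3) and bnd = assms(5) and int1 = assms(6) and Mpos = assms(7)
  have dpos: "real CARD('d) > 0" by simp
  define p where "p = 1/(2*M)"
  have p: "p > 0" using Mpos by (simp add: p_def)
  define \<kappa> where "\<kappa> = p^2/4"
  have kappa: "\<kappa> > 0" using p by (simp add: \<kappa>_def)
  define c where "c = p^4/4"
  have cpos: "c > 0" using p by (simp add: c_def)
  define s where "s = real CARD('d) + \<alpha>"
  define C1 where "C1 = 8 * (2 * sqrt (real CARD('d))) powr s / \<kappa>"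
  have C1pos: "C1 > 0" unfolding C1_def using kappa dpos by simp
  show ?thesis
  proof (intro exI[of _ C1] conjI allI impI)
    show "C1 > 0" by (rule C1pos)
    fix \<theta> :: real assume th: "\<theta> > 1 / real CARD('d)"
    have thd: "\<theta> * real CARD('d) > 1" using th dpos by (simp add: divide_less_eq)
    have thpos: "\<theta> > 0" using th dpos by (meson less_trans zero_less_divide_1_iff)
    define m where "m n = \<lfloor>ln (real n) powr \<theta>\<rfloor>" for n :: nat
    have m0: "m n \<ge> 0" for n unfolding m_def by simp
    define J where "J n = {m n .. int n + 1} \<times> {0::int, 1} \<times> zbox (real n + 1) (0::int^'d)" for n
    define bx where "bx j = ibox (1 - fst j - fst (snd j)) (fst j) (snd (snd j))" for j :: "int \<times> int \<times> (int^'d)"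
    define E where "E n = (\<Union>j\<in>J n. Bad W P \<kappa> (bx j))" for n
    have finJ: "finite (J n)" for n unfolding J_def by (simp add: zbox_finite)
    have bxJ: "finite (bx j) \<and> card (bx j) = nat (2 * fst j + fst (snd j)) ^ CARD('d)" if "j \<in> J n" for j n
    proof -
      have u: "fst j \<ge> 0" "fst (snd j) \<ge> 0" using that m0[of n] by (auto simp: J_def)
      then have le: "1 - fst j - fst (snd j) \<le> fst j + 1" by linarith
      show ?thesis unfolding bx_def using card_ibox[OF le, where y="snd (snd j)"] by simp
    qed
    have E_sets: "E n \<in> events" for n
      unfolding E_def using finJ bxJ by (intro sets.finite_UN Bad_sets[OF meas]) auto
    have E_bound: "prob (E n) \<le> real (2*n+3)^(3 * CARD('d) + 2) * exp (- c * (real_of_int (m n))^CARD('d))"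
      if m4: "4 \<le> m n" for n
    proof -
      define T where "T = real (2*n+3)"
      have T1: "T \<ge> 1" unfolding T_def by simp
      define G where "G = T^(2 * CARD('d)) * exp (- c * (real_of_int (m n))^CARD('d))"
      have each: "prob (Bad W P \<kappa> (bx j)) \<le> G" if j: "j \<in> J n" for j
      proof -
        define N where "N = card (bx j)"
        have fin: "finite (bx j)" and cN: "N = nat (2 * fst j + fst (snd j)) ^ CARD('d)"
          using bxJ[OF j] by (auto simp: N_def)
        have uj: "m n \<le> fst j" "fst j \<le> int n + 1" "0 \<le> fst (snd j)" "fst (snd j) \<le> 1"
          using j by (auto simp: J_def)
        have b1: "real_of_int (m n) \<le> real (nat (2 * fst j + fst (snd j)))" using uj m0[of n] by linarith
        have b2: "real (nat (2 * fst j + fst (snd j))) \<le> T" using uj unfolding T_def by linarith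
        have Nlow: "(real_of_int (m n))^CARD('d) \<le> real N"
          unfolding cN using b1 m0[of n] by (simp add: power_mono)
        have Nhigh: "real N \<le> T^CARD('d)"
          unfolding cN using b2 by (simp add: power_mono)
        have "(4::real) \<le> real_of_int (m n)" using m4 by simp
        also have "\<dots> \<le> real_of_int (m n) ^ CARD('d)"
          using m4 card_pos_d[where 'd='d] by (intro self_le_power) auto
        finally have N4: "card (bx j) \<ge> 4" using Nlow unfolding N_def by linarith
        have "prob (Bad W P \<kappa> (bx j)) \<le> real N^2 * exp (- c * real N)"
          using Bad_bound[OF meas indep bnd int1 Mpos fin N4]
          unfolding N_def \<kappa>_def c_def p_def by simp
        also have "\<dots> \<le> (T^CARD('d))^2 * exp (- c * (real_of_int (m n))^CARD('d))"
          using Nhigh Nlow cpos by (intro mult_mono power_mono) auto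
        also have "\<dots> = G" unfolding G_def by (simp add: power_mult[symmetric] mult.commute)
        finally show ?thesis .
      qed
      have cardJ: "real (card (J n)) \<le> T^(CARD('d) + 2)"
      proof -
        have c1: "card {m n .. int n + 1} \<le> 2*n+3" using m0[of n] by simp
        have c3: "card (zbox (real n + 1) (0::int^'d)) = (2*n+2)^CARD('d)"
        proof -
          have "card (zbox (real n + 1) (0::int^'d)) = nat (\<lfloor>real n + 1\<rfloor> + \<lceil>real n + 1\<rceil>) ^ CARD('d)"
            by (rule zbox_card(1)) simp
          also have "nat (\<lfloor>real n + 1\<rfloor> + \<lceil>real n + 1\<rceil>) = 2*n+2"
          proof -
            have e: "real n + 1 = real_of_int (int n + 1)" by simp
            have f1: "\<lfloor>real n + 1\<rfloor> = int n + 1" unfolding e by (rule floor_of_int)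
            have f2: "\<lceil>real n + 1\<rceil> = int n + 1" unfolding e by (rule ceiling_of_int)
            show ?thesis unfolding f1 f2 by simp
          qed
          finally show ?thesis .
        qed
        have "card (J n) = card {m n .. int n + 1} * (2 * (2*n+2)^CARD('d))"
          unfolding J_def by (simp add: card_cartesian_product c3)
        then have "real (card (J n)) = real (card {m n .. int n + 1}) * (2 * real (2*n+2)^CARD('d))"
          by simp
        also have "\<dots> \<le> T * (T * T^CARD('d))"
          unfolding T_def using c1
          by (intro mult_mono power_mono) auto
        also have "\<dots> = T^(CARD('d) + 2)" by (simp add: power_add power2_eq_square mult_ac)
        finally show ?thesis .
      qed
      have "prob (E n) \<le> (\<Sum>j\<in>J n. prob (Bad W P \<kappa> (bx j)))"
        unfolding E_def using finJ bxJ by (intro measure_UNION_le Bad_sets[OF meas]) auto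
      also have "\<dots> \<le> (\<Sum>j\<in>J n. G)" using each by (intro sum_mono) auto
      also have "\<dots> = real (card (J n)) * G" by simp
      also have "\<dots> \<le> T^(CARD('d) + 2) * G"
        using cardJ by (intro mult_right_mono) (auto simp: G_def)
      also have "\<dots> = real (2*n+3)^(3 * CARD('d) + 2) * exp (- c * (real_of_int (m n))^CARD('d))"
        unfolding G_def T_def by (simp add: power_add[symmetric] mult.assoc[symmetric])
      finally show ?thesis .
    qed
    have summ: "summable (\<lambda>n. prob (E n))"
    proof (rule summable_comparison_test_ev)
      show "summable (\<lambda>n. inverse (real n ^ 2))" by (rule inverse_power_summable) simp
      have tb: "eventually (\<lambda>n. 4 \<le> \<lfloor>ln (real n) powr \<theta>\<rfloor> \<and>
         real (2*n+3)^(3 * CARD('d) + 2) * exp (- c * (real_of_int \<lfloor>ln (real n) powr \<theta>\<rfloor>)^CARD('d)) \<le> inverse (real n ^ 2)) sequentially"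
        by (rule tail_bound[OF cpos _ thd]) simp
      show "eventually (\<lambda>n. norm (prob (E n)) \<le> inverse (real n ^ 2)) sequentially"
        using tb
      proof eventually_elim
        case (elim n)
        then have "prob (E n) \<le> inverse (real n ^ 2)"
          using E_bound[of n] unfolding m_def by linarith
        then show ?case by simp
      qed
    qed
    have BC: "AE \<omega> in P. eventually (\<lambda>n. \<omega> \<in> space P - E n) sequentially"
      by (rule borel_cantelli_AE1) (use E_sets summ in \<open>auto simp: less_top[symmetric] emeasure_finite\<close>)
    define R0 where "R0 \<omega> = (SUP n. ereal (if \<omega> \<in> E n then real n + 3 else 3))" for \<omega>
    have R0_ge3: "3 \<le> R0 \<omega>" for \<omega>
      unfolding R0_def by (rule SUP_upper2[of 0]) auto
    have R0_E: "ereal (real n + 3) \<le> R0 \<omega>" if "\<omega> \<in> E n" for \<omega> n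
      unfolding R0_def using that by (intro SUP_upper2[of n]) auto
    show "\<exists>R0 :: 'a \<Rightarrow> ereal. R0 \<in> borel_measurable P \<and> (\<forall>\<omega>\<in>space P. 1 \<le> R0 \<omega>)
      \<and> (AE \<omega> in P. R0 \<omega> < \<infinity>)
      \<and> (AE \<omega> in P. \<forall>(f :: int^'d \<Rightarrow> real) (R::real) y (r::real).
            ereal R > R0 \<omega> \<and> y \<in> zbox R 0 \<and> (ln R) powr \<theta> \<le> r \<and> r \<le> R \<longrightarrow>
            (\<Sum>x\<in>zbox r y. (f x)^2) / real (card (zbox r y))
              - ((\<Sum>x\<in>zbox r y. f x) / real (card (zbox r y)))^2
            \<le> C1 * r powr (\<alpha> - real CARD('d)) * energy (zbox r y) W \<omega> \<alpha> f)"
    proof (intro exI[of _ R0] conjI)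
      show "R0 \<in> borel_measurable P"
        unfolding R0_def
      proof (rule borel_measurable_SUP)
        fix n :: nat
        have [measurable]: "E n \<in> sets P" using E_sets by simp
        show "(\<lambda>\<omega>. ereal (if \<omega> \<in> E n then real n + 3 else 3)) \<in> borel_measurable P"
          by measurable
      qed simp
      show "\<forall>\<omega>\<in>space P. 1 \<le> R0 \<omega>"
      proof
        fix \<omega> have "(1::ereal) \<le> 3" by simp
        then show "1 \<le> R0 \<omega>" using R0_ge3[of \<omega>] by (rule order_trans)
      qed
      show "AE \<omega> in P. R0 \<omega> < \<infinity>"
        using BC
      proof eventually_elim
        case (elim \<omega>)
        then obtain N0 where N0: "\<And>n. n \<ge> N0 \<Longrightarrow> \<omega> \<notin> E n"
          unfolding eventually_sequentially by auto
        have "R0 \<omega> \<le> ereal (real N0 + 3)"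
          unfolding R0_def
        proof (rule SUP_least)
          fix n assume "n \<in> (UNIV :: nat set)"
          show "ereal (if \<omega> \<in> E n then real n + 3 else 3) \<le> ereal (real N0 + 3)"
          proof (cases "\<omega> \<in> E n")
            case True
            then have "n < N0" using N0 by (meson not_le)
            then show ?thesis using True by simp
          qed simp
        qed
        then show ?case by (rule le_less_trans) simp
      qed
      show "AE \<omega> in P. \<forall>(f :: int^'d \<Rightarrow> real) (R::real) y (r::real).
            ereal R > R0 \<omega> \<and> y \<in> zbox R 0 \<and> (ln R) powr \<theta> \<le> r \<and> r \<le> R \<longrightarrow>
            (\<Sum>x\<in>zbox r y. (f x)^2) / real (card (zbox r y))
              - ((\<Sum>x\<in>zbox r y. f x) / real (card (zbox r y)))^2
            \<le> C1 * r powr (\<alpha> - real CARD('d)) * energy (zbox r y) W \<omega> \<alpha> f"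
      proof (rule AE_I2, intro allI impI)
        fix \<omega> and f :: "int^'d \<Rightarrow> real" and R :: real and y :: "int^'d" and r :: real
        assume \<omega>: "\<omega> \<in> space P"
        assume H: "ereal R > R0 \<omega> \<and> y \<in> zbox R 0 \<and> (ln R) powr \<theta> \<le> r \<and> r \<le> R"
        then have HR: "R0 \<omega> < ereal R" and Hy: "y \<in> zbox R 0" and Hr1: "(ln R) powr \<theta> \<le> r"
          and Hr2: "r \<le> R" by auto
        have R3: "R > 3" using R0_ge3[of \<omega>] HR by (metis ereal_less(2) le_less_trans less_ereal.simps(1) numeral_eq_ereal)
        define n where "n = nat (\<lceil>R\<rceil> - 1)"
        have cR: "real_of_int \<lceil>R\<rceil> - 1 < R" "R \<le> real_of_int \<lceil>R\<rceil>" using ceiling_correct[of R] by auto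
        have c4: "\<lceil>R\<rceil> \<ge> 4" using R3 cR by linarith
        have nI: "int n = \<lceil>R\<rceil> - 1" unfolding n_def using c4 by simp
        have nR: "real n = real_of_int \<lceil>R\<rceil> - 1" using nI by (metis of_int_1 of_int_diff of_int_of_nat_eq)
        have n3: "n \<ge> 3" using nI c4 by linarith
        have n1: "real n < R" "R \<le> real n + 1" "n \<ge> 3" using nR cR n3 by auto
        have notE: "\<omega> \<notin> E n"
        proof
          assume "\<omega> \<in> E n"
          then have "ereal (real n + 3) < ereal R" using R0_E HR by (meson le_less_trans)
          then show False using n1 by simp
        qed
        have lnR: "ln R \<ge> 1"
        proof -
          have "exp 1 \<le> R" using exp_le R3 by linarith
          then have "ln (exp 1) \<le> ln R" using R3 by (subst ln_le_cancel_iff) auto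
          then show ?thesis by simp
        qed
        have lnRt: "(ln R) powr \<theta> \<ge> 1" using lnR thpos by (intro ge_one_powr_ge_zero) auto
        have r1: "r \<ge> 1" using lnRt Hr1 by linarith
        define S where "S = zbox r y"
        define j where "j = (\<lfloor>r\<rfloor>, \<lceil>r\<rceil> - \<lfloor>r\<rfloor>, y)"
        have Sbx: "S = bx j" unfolding S_def bx_def j_def zbox_ibox by simp
        have jJ: "j \<in> J n"
        proof -
          have "ln (real n) \<le> ln R" using n1 R3 by (subst ln_le_cancel_iff) auto
          moreover have "ln (real n) \<ge> 0" using n1 by simp
          ultimately have "ln (real n) powr \<theta> \<le> ln R powr \<theta>" using thpos by (intro powr_mono2) auto
          then have "ln (real n) powr \<theta> \<le> r" using Hr1 by linarith
          then have a: "m n \<le> \<lfloor>r\<rfloor>" unfolding m_def by (rule floor_mono)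
          have "real_of_int \<lfloor>r\<rfloor> \<le> real n + 1" using Hr2 n1 floor_correct[of r] by linarith
          then have b: "\<lfloor>r\<rfloor> \<le> int n + 1" by linarith
          have c0: "0 \<le> \<lceil>r\<rceil> - \<lfloor>r\<rfloor>" "\<lceil>r\<rceil> - \<lfloor>r\<rfloor> \<le> 1"
            using ceiling_diff_floor_le_1[of r] floor_le_ceiling[of r] by linarith+
          then have "\<lceil>r\<rceil> - \<lfloor>r\<rfloor> = 0 \<or> \<lceil>r\<rceil> - \<lfloor>r\<rfloor> = 1" by arith
          then have c: "\<lceil>r\<rceil> - \<lfloor>r\<rfloor> \<in> {0, 1}" by blast
          have d: "y \<in> zbox (real n + 1) 0" using zbox_mono[OF n1(2) Hy] .
          show ?thesis unfolding j_def J_def using a b c d by auto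
        qed
        have notBad: "\<omega> \<notin> Bad W P \<kappa> S" using notE jJ unfolding E_def Sbx by auto
        have finS: "finite S" unfolding S_def by (rule zbox_finite)
        have rd: "r ^ CARD('d) \<le> real (card S)" unfolding S_def using zbox_card(2)[OF r1, where y=y] by simp
        have rdpos: "r ^ CARD('d) > 0" using r1 by simp
        have Npos: "card S > 0" using rd rdpos by linarith
        have Wnn: "0 \<le> W {x,z} \<omega>" if "x \<in> S" "z \<in> S" "x \<noteq> z" for x z
          using bnd upairsI[OF that(3)] \<omega> by auto
        have good: "\<kappa> * real (card S) \<le> cnt W \<omega> x y' S" if "x \<in> S" "y' \<in> S" "x \<noteq> y'" for x y'
        proof (rule ccontr)
          assume nt: "\<not> ?thesis"
          have "cnt W \<omega> x y' S < \<kappa> * real (card S)" using nt by simp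
          then have "\<omega> \<in> {\<omega>\<in>space P. cnt W \<omega> (fst (x,y')) (snd (x,y')) S < \<kappa> * real (card S)}"
            using \<omega> by simp
          moreover have "(x,y') \<in> {xy. fst xy \<in> S \<and> snd xy \<in> S \<and> fst xy \<noteq> snd xy}" using that by simp
          ultimately have "\<omega> \<in> Bad W P \<kappa> S" unfolding Bad_def by blast
          then show False using notBad by simp
        qed
        have dist: "zdist x z \<le> 2 * r * sqrt (real CARD('d))" if "x \<in> S" "z \<in> S" for x z
          using zdist_zbox that unfolding S_def by blast
        have main: "(\<Sum>x\<in>S. (f x)^2) / real (card S) - ((\<Sum>x\<in>S. f x) / real (card S))^2
           \<le> 8 * (2 * r * sqrt (real CARD('d))) powr (real CARD('d) + \<alpha>) / (\<kappa> * (real (card S))^2) * energy S W \<omega> \<alpha> f"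
          by (rule det_poincare[OF finS Npos Wnn good dist kappa assms(8)])
        have En: "0 \<le> energy S W \<omega> \<alpha> f" by (rule energy_nonneg) (rule Wnn)
        have coef: "8 * (2 * r * sqrt (real CARD('d))) powr s / (\<kappa> * (real (card S))^2) \<le> C1 * r powr (\<alpha> - real CARD('d))"
        proof -
          have rp: "r > 0" using r1 by simp
          have A: "(2 * r * sqrt (real CARD('d))) powr s = (2 * sqrt (real CARD('d))) powr s * r powr s"
            using rp by (simp add: powr_mult[symmetric] mult_ac)
          have rdp: "r ^ CARD('d) = r powr real CARD('d)" using rp by (simp add: powr_realpow)
          have "(r powr real CARD('d))^2 \<le> (real (card S))^2"
            using rd rdpos unfolding rdp by (intro power_mono) auto
          then have B: "r powr (2 * real CARD('d)) \<le> (real (card S))^2"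
            using rp by (simp add: powr_realpow[symmetric] powr_powr mult.commute)
          have Bp: "r powr (2 * real CARD('d)) > 0" using rp by simp
          have K: "8 * (2 * sqrt (real CARD('d))) powr s * r powr s \<ge> 0" by simp
          have "8 * (2 * r * sqrt (real CARD('d))) powr s / (\<kappa> * (real (card S))^2)
              = (8 * (2 * sqrt (real CARD('d))) powr s * r powr s) / \<kappa> / (real (card S))^2"
            unfolding A by (simp add: field_simps)
          also have "\<dots> \<le> (8 * (2 * sqrt (real CARD('d))) powr s * r powr s) / \<kappa> / r powr (2 * real CARD('d))"
            using B Bp K kappa Npos by (intro divide_left_mono divide_nonneg_pos mult_pos_pos) auto
          also have "\<dots> = C1 * (r powr s / r powr (2 * real CARD('d)))"
            unfolding C1_def by (simp add: field_simps)
          also have "r powr s / r powr (2 * real CARD('d)) = r powr (\<alpha> - real CARD('d))"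
            unfolding s_def using rp by (simp add: powr_diff[symmetric])
          finally show ?thesis .
        qed
        have "(\<Sum>x\<in>S. (f x)^2) / real (card S) - ((\<Sum>x\<in>S. f x) / real (card S))^2
           \<le> C1 * r powr (\<alpha> - real CARD('d)) * energy S W \<omega> \<alpha> f"
          using main coef En unfolding s_def by (meson mult_right_mono order_trans)
        then show "(\<Sum>x\<in>zbox r y. (f x)^2) / real (card (zbox r y))
              - ((\<Sum>x\<in>zbox r y. f x) / real (card (zbox r y)))^2
            \<le> C1 * r powr (\<alpha> - real CARD('d)) * energy (zbox r y) W \<omega> \<alpha> f"
          unfolding S_def .
      qed
    qed
  qed
qed

end
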